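(* Let $U_n\in(\mathcal{V}_0)^N\cap\mathcal{M}_{\leqslant}^{N;N_g}$ be an iterate of the quasi-orthogonal scheme described in the context, with step size $s_n<\frac{2}{|\lambda_1-\lambda_{\max}|}$, and let $U_{n+1}$ be produced from $U_n$ by one step of that scheme. Then the components of $U_{n+1}$ are linearly independent, i.e. $U_{n+1}^\top U_{n+1}>0$.
   Context: Let $\mathcal{V}^{N_g}$ be a real Hilbert space of finite dimension $N_g$ with inner product $(\cdot,\cdot)$ (in the paper a finite element subspace of $H_0^1(\Omega)$ with the $L^2(\Omega)$ inner product), and let $H:\mathcal{V}^{N_g}\to\mathcal{V}^{N_g}$ be a self-adjoint linear operator with smallest eigenvalue $\lambda_1$ and largest eigenvalue $\lambda_{\max}$; it is assumed that $\lambda_1<0$. Fix $N\in\mathbb{N}_+$. Elements of $(\mathcal{V}^{N_g})^N$ are written $U=(u_1,\dots,u_N)$; $U^\top V=((u_i,v_j))_{i,j=1}^N$; for a real $N\times N$ matrix $A=(a_{kj})$, $UA$ is the element whose $j$-th component is $\sum_k a_{kj}u_k$; $HU=(Hu_1,\dots,Hu_N)$. For symmetric matrices, $A\leqslant B$ means $B-A$ is positive semidefinite and $A>0$ means positive definite. Set $\nabla E(U)=HU$. For $U\in(\mathcal{V}^{N_g})^N$, $\mathcal{A}_U=\nabla E(U)U^\top-U\nabla E(U)^\top$ is the linear operator on $\mathcal{V}^{N_g}$ given by $\mathcal{A}_Uw=\sum_{i=1}^N\big(Hu_i\,(u_i,w)-u_i\,(Hu_i,w)\big)$, applied componentwise to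 elements of $(\mathcal{V}^{N_g})^N$. The quasi-Stiefel set is $\mathcal{M}_{\leqslant}^{N;N_g}=\{U:0<U^\top U\leqslant I_N\}$. Quasi-orthogonal scheme: given step sizes $s_n>0$ with $\sum_n s_n=+\infty$ and initial data $U_0$, $\hat U_{n+1}$ satisfies $\hat U_{n+1}=U_n-s_n\mathcal{A}_{\tilde U_{n+\frac12}}\tilde U_{n+\frac12}$ with $\tilde U_{n+\frac12}=\frac{U_n+\hat U_{n+1}}{2}$, and $U_{n+1}=\hat U_{n+1}-s_n\nabla E(\hat U_{n+1})(I_N-\hat U_{n+1}^\top\hat U_{n+1})$. For $j=1,\dots,N$, let $\mathcal{V}_{0_j}=\operatorname{span}\{v_{j,1},\dots,v_{j,d_j}\}$ ($d_j\geqslant1$) with each $v_{j,k}$ an eigenvector of $H$, and $(\mathcal{V}_0)^N=\mathcal{V}_{0_1}\times\cdots\times\mathcal{V}_{0_N}$. Let $\lambda_{\max}^0=\max_{j,k}\frac{(v_{j,k},Hv_{j,k})}{(v_{j,k},v_{j,k})}$. Standing assumption: $\lambda_{\max}^0\leqslant 0$. *)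

theory Defs
  imports "HOL-Analysis.Analysis"
begin

text \<open>The finite-dimensional real Hilbert space is a type 'v of class
euclidean_space (inner product written with bullet). Elements of (V)^N are functions
nat => 'v of which only the components with index i < N matter (components
u_1..u_N are indexed 0..N-1). Real N x N matrices are functions nat => nat => real,
again only entries with indices < N matter.\<close>

definition gram :: "nat \<Rightarrow> (nat \<Rightarrow> 'v::real_inner) \<Rightarrow> (nat \<Rightarrow> 'v) \<Rightarrow> nat \<Rightarrow> nat \<Rightarrow> real" where
  "gram N U V i j = inner (U i) (V j)"

definition idm :: "nat \<Rightarrow> nat \<Rightarrow> real" where
  "idm i j = (if i = j then 1 else 0)"

definition psd :: "nat \<Rightarrow> (nat \<Rightarrow> nat \<Rightarrow> real) \<Rightarrow> bool" where
  "psd N A \<longleftrightarrow> (\<forall>i<N. \<forall>j<N. A i j = A j i) \<and>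
     (\<forall>c::nat \<Rightarrow> real. 0 \<le> (\<Sum>i<N. \<Sum>j<N. c i * A i j * c j))"

definition pd :: "nat \<Rightarrow> (nat \<Rightarrow> nat \<Rightarrow> real) \<Rightarrow> bool" where
  "pd N A \<longleftrightarrow> (\<forall>i<N. \<forall>j<N. A i j = A j i) \<and>
     (\<forall>c::nat \<Rightarrow> real. (\<exists>i<N. c i \<noteq> 0) \<longrightarrow> 0 < (\<Sum>i<N. \<Sum>j<N. c i * A i j * c j))"

text \<open>U A : the j-th component is sum_k a_kj u_k.\<close>
definition mat_act :: "nat \<Rightarrow> (nat \<Rightarrow> 'v::real_vector) \<Rightarrow> (nat \<Rightarrow> nat \<Rightarrow> real) \<Rightarrow> nat \<Rightarrow> 'v" where
  "mat_act N U A j = (\<Sum>k<N. A k j *\<^sub>R U k)"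

definition opA :: "nat \<Rightarrow> ('v::real_inner \<Rightarrow> 'v) \<Rightarrow> (nat \<Rightarrow> 'v) \<Rightarrow> 'v \<Rightarrow> 'v" where
  "opA N H U w = (\<Sum>i<N. inner (U i) w *\<^sub>R H (U i) - inner (H (U i)) w *\<^sub>R U i)"

definition quasi_stiefel :: "nat \<Rightarrow> (nat \<Rightarrow> 'v::real_inner) \<Rightarrow> bool" where
  "quasi_stiefel N U \<longleftrightarrow> pd N (gram N U U) \<and> psd N (\<lambda>i j. idm i j - gram N U U i j)"

definition is_eigenvalue :: "('v::real_vector \<Rightarrow> 'v) \<Rightarrow> real \<Rightarrow> bool" where
  "is_eigenvalue H \<mu> \<longleftrightarrow> (\<exists>v. v \<noteq> 0 \<and> H v = \<mu> *\<^sub>R v)"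

definition is_eigenvector :: "('v::real_vector \<Rightarrow> 'v) \<Rightarrow> 'v \<Rightarrow> bool" where
  "is_eigenvector H v \<longleftrightarrow> v \<noteq> 0 \<and> (\<exists>\<mu>. H v = \<mu> *\<^sub>R v)"

definition qo_half_step :: "nat \<Rightarrow> ('v::real_inner \<Rightarrow> 'v) \<Rightarrow> real \<Rightarrow> (nat \<Rightarrow> 'v) \<Rightarrow> (nat \<Rightarrow> 'v) \<Rightarrow> bool" where
  "qo_half_step N H s U Uh \<longleftrightarrow>
     (\<forall>j<N. Uh j = U j - s *\<^sub>R opA N H (\<lambda>i. (1/2) *\<^sub>R (U i + Uh i)) ((1/2) *\<^sub>R (U j + Uh j)))"

text \<open>Correction step: U_{n+1} = Uhat - s grad E(Uhat) (I - Uhat^T Uhat), grad E(U) = H U.\<close>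
definition qo_correction :: "nat \<Rightarrow> ('v::real_inner \<Rightarrow> 'v) \<Rightarrow> real \<Rightarrow> (nat \<Rightarrow> 'v) \<Rightarrow> nat \<Rightarrow> 'v" where
  "qo_correction N H s Uh j =
     Uh j - s *\<^sub>R mat_act N (\<lambda>k. H (Uh k)) (\<lambda>k l. idm k l - gram N Uh Uh k l) j"

end

theory Submission
  imports Defs
begin

lemma var_zero:
  fixes Q :: "'v::real_inner \<Rightarrow> 'v"
  assumes lq: "linear Q" and sa: "\<forall>x y. inner (Q x) y = inner x (Q y)"
    and z: "inner x0 (Q x0) = 0"
    and nn: "\<forall>t::real. 0 \<le> inner (x0 - t *\<^sub>R y) (Q (x0 - t *\<^sub>R y))"
  shows "inner y (Q x0) = 0"
proof -
  define p where "p = inner y (Q x0)"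
  define K where "K = inner y (Q y)"
  have sym: "inner x0 (Q y) = p" unfolding p_def by (metis sa inner_commute)
  have e: "inner (x0 - t *\<^sub>R y) (Q (x0 - t *\<^sub>R y)) = - 2*t*p + t^2 * K" for t
    using z sym unfolding p_def K_def
    by (simp add: linear_diff[OF lq] linear_scale[OF lq] inner_diff_left inner_diff_right power2_eq_square algebra_simps)
  define D where "D = \<bar>K\<bar> + 1"
  have Dp: "D > 0" unfolding D_def by simp
  define t where "t = p / D"
  have pD: "p = t * D" unfolding t_def using Dp by simp
  have "0 \<le> - 2*t*p + t^2 * K" using nn e by metis
  hence "0 \<le> (- 2*t*p + t^2 * K) * D^2" by simp
  also have "\<dots> = p^2 * (-2 * D + K)"
    unfolding pD by (simp add: power2_eq_square algebra_simps)
  finally have "0 \<le> p^2 * (-2 * D + K)" .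
  moreover have "-2 * D + K < 0" unfolding D_def by (cases "K \<ge> 0") auto
  ultimately have "p^2 \<le> 0" by (simp add: mult_le_0_iff zero_le_mult_iff)
  thus ?thesis unfolding p_def by simp
qed

lemma rayleigh_max:
  fixes H :: "'v::euclidean_space \<Rightarrow> 'v"
  assumes lin: "linear H" and sa: "\<forall>x y. inner (H x) y = inner x (H y)"
  shows "\<exists>\<mu>. is_eigenvalue H \<mu> \<and> (\<forall>x. inner x (H x) \<le> \<mu> * inner x x)"
proof -
  have cont: "continuous_on (sphere 0 1) (\<lambda>x. inner x (H x))"
    using lin by (intro continuous_intros) (simp add: linear_continuous_on linear_linear)
  obtain b :: 'v where b: "b \<in> Basis" using nonempty_Basis by blast
  have "b \<in> sphere 0 1" using b by simp
  hence ne: "sphere (0::'v) 1 \<noteq> {}" by blast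
  obtain x0 where x0: "x0 \<in> sphere 0 1" and mx: "\<forall>y\<in>sphere 0 1. inner y (H y) \<le> inner x0 (H x0)"
    using continuous_attains_sup[OF compact_sphere ne cont] by blast
  define \<mu> where "\<mu> = inner x0 (H x0)"
  have n1: "inner x0 x0 = 1" using x0 by (simp add: dot_square_norm)
  have bound: "inner x (H x) \<le> \<mu> * inner x x" for x
  proof (cases "x = 0")
    case True thus ?thesis using lin by (simp add: linear_0)
  next
    case False
    define y where "y = (1/norm x) *\<^sub>R x"
    have "y \<in> sphere 0 1" using False by (simp add: y_def)
    hence "inner y (H y) \<le> \<mu>" using mx \<mu>_def by blast
    moreover have "inner y (H y) = inner x (H x) / (norm x)^2"
      unfolding y_def by (simp add: linear_scale[OF lin] power2_eq_square)
    moreover have "inner x x = (norm x)^2" by (simp add: dot_square_norm)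
    moreover have "(norm x)^2 > 0" using False by simp
    ultimately show ?thesis by (simp add: divide_le_eq)
  qed
  define Q where "Q x = \<mu> *\<^sub>R x - H x" for x
  have lq: "linear Q" unfolding Q_def[abs_def]
    using lin by (intro linear_compose_sub linear_compose_scale_right linear_id[unfolded id_def]) auto
  have saQ: "\<forall>x y. inner (Q x) y = inner x (Q y)" unfolding Q_def using sa
    by (simp add: inner_diff_left inner_diff_right inner_commute)
  have psdQ: "0 \<le> inner x (Q x)" for x using bound[of x] unfolding Q_def
    by (simp add: inner_diff_right)
  have zq: "inner x0 (Q x0) = 0" unfolding Q_def using n1 \<mu>_def by (simp add: inner_diff_right)
  have "inner (Q x0) (Q x0) = 0" using var_zero[OF lq saQ zq] psdQ by blast
  hence "Q x0 = 0" by simp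
  hence "H x0 = \<mu> *\<^sub>R x0" unfolding Q_def by simp
  moreover have "x0 \<noteq> 0" using x0 by auto
  ultimately have "is_eigenvalue H \<mu>" unfolding is_eigenvalue_def by blast
  thus ?thesis using bound by blast
qed

lemma gram_expand:
  fixes p :: "nat \<Rightarrow> 'v::euclidean_space"
  shows "(\<Sum>i<N. \<Sum>j<N. inner (p i) (p j) * K i j) =
    (\<Sum>b\<in>Basis. \<Sum>i<N. \<Sum>j<N. inner (p i) b * K i j * inner (p j) b)"
proof -
  have "(\<Sum>i<N. \<Sum>j<N. inner (p i) (p j) * K i j) =
     (\<Sum>i<N. \<Sum>j<N. \<Sum>b\<in>Basis. inner (p i) b * K i j * inner (p j) b)"
    by (subst euclidean_inner) (simp add: sum_distrib_right sum_distrib_left mult_ac)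
  also have "\<dots> = (\<Sum>i<N. \<Sum>b\<in>Basis. \<Sum>j<N. inner (p i) b * K i j * inner (p j) b)"
    by (rule sum.cong[OF refl], rule sum.swap)
  also have "(\<Sum>i<N. \<Sum>b\<in>Basis. \<Sum>j<N. inner (p i) b * K i j * inner (p j) b) =
     (\<Sum>b\<in>Basis. \<Sum>i<N. \<Sum>j<N. inner (p i) b * K i j * inner (p j) b)"
    by (rule sum.swap)
  finally show ?thesis .
qed

lemma quadQ:
  fixes q :: "nat \<Rightarrow> 'v::real_inner"
  assumes lq: "linear Q"
  shows "(\<Sum>i<N. \<Sum>j<N. c i * inner (q i) (Q (q j)) * c j) =
    inner (\<Sum>i<N. c i *\<^sub>R q i) (Q (\<Sum>j<N. c j *\<^sub>R q j))"
proof -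
  have "inner (\<Sum>i<N. c i *\<^sub>R q i) (Q (\<Sum>j<N. c j *\<^sub>R q j)) =
    (\<Sum>i<N. c i * inner (q i) (\<Sum>j<N. c j *\<^sub>R Q (q j)))"
    by (simp add: linear_sum[OF lq] linear_scale[OF lq] inner_sum_left o_def)
  also have "\<dots> = (\<Sum>i<N. \<Sum>j<N. c i * inner (q i) (Q (q j)) * c j)"
    by (simp add: inner_sum_right sum_distrib_left mult_ac)
  finally show ?thesis by simp
qed

lemma psd_trick:
  fixes p q :: "nat \<Rightarrow> 'v::euclidean_space"
  assumes lq: "linear Q" and ps: "\<forall>x. 0 \<le> inner x (Q x)"
  shows "0 \<le> (\<Sum>i<N. \<Sum>j<N. inner (p i) (p j) * inner (q i) (Q (q j)))"
  unfolding gram_expand quadQ[OF lq]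
  by (intro sum_nonneg) (simp add: ps)

lemma W_inv:
  fixes H :: "'v::euclidean_space \<Rightarrow> 'v"
  assumes lin: "linear H" and ev: "\<forall>v\<in>S. is_eigenvector H v"
  shows "w \<in> span S \<Longrightarrow> H w \<in> span S"
proof -
  have "H ` S \<subseteq> span S"
  proof
    fix x assume "x \<in> H ` S"
    then obtain v where v: "v \<in> S" "x = H v" by blast
    then obtain m where "H v = m *\<^sub>R v" using ev unfolding is_eigenvector_def by blast
    thus "x \<in> span S" using v by (simp add: span_base span_mul)
  qed
  hence "span (H ` S) \<subseteq> span S" by (simp add: span_minimal subspace_span)
  moreover assume "w \<in> span S"
  ultimately show ?thesis using span_linear_image[OF lin, of S] by blast
qed

lemma W_nonpos:
  fixes H :: "'v::euclidean_space \<Rightarrow> 'v"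
  assumes lin: "linear H" and sa: "\<forall>x y. inner (H x) y = inner x (H y)"
    and fin: "finite S"
    and ev: "\<forall>v\<in>S. is_eigenvector H v \<and> inner v (H v) / inner v v \<le> 0"
    and w: "w \<in> span S"
  shows "inner w (H w) \<le> 0"
proof -
  define e where "e v = (SOME m. H v = m *\<^sub>R v)" for v
  have evp: "H v = e v *\<^sub>R v \<and> e v \<le> 0" if "v \<in> S" for v
  proof -
    have ne: "v \<noteq> 0" and ex: "\<exists>m. H v = m *\<^sub>R v" using ev that unfolding is_eigenvector_def by auto
    have He: "H v = e v *\<^sub>R v" unfolding e_def using someI_ex[OF ex] .
    have "inner v (H v) / inner v v = e v" using ne by (simp add: He)
    thus ?thesis using He ev that by auto
  qed
  obtain u where wu: "w = (\<Sum>v\<in>S. u v *\<^sub>R v)" using w span_finite[OF fin] by auto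
  define wg where "wg m = (\<Sum>v\<in>{v. v \<in> S \<and> e v = m}. u v *\<^sub>R v)" for m
  define E where "E = e ` S"
  have finE: "finite E" unfolding E_def using fin by simp
  have wsum: "w = (\<Sum>m\<in>E. wg m)" unfolding wu wg_def E_def by (rule sum.image_gen[OF fin])
  have Hwg: "H (wg m) = m *\<^sub>R wg m" for m
  proof -
    have "H (wg m) = (\<Sum>v\<in>{v. v \<in> S \<and> e v = m}. u v *\<^sub>R H v)"
      unfolding wg_def by (simp add: linear_sum[OF lin] linear_scale[OF lin] o_def)
    also have "\<dots> = (\<Sum>v\<in>{v. v \<in> S \<and> e v = m}. m *\<^sub>R (u v *\<^sub>R v))"
      by (rule sum.cong) (auto simp: evp)
    finally show ?thesis unfolding wg_def by (simp add: scaleR_sum_right)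
  qed
  have orth: "inner (wg m) (wg n) = 0" if "m \<noteq> n" for m n
  proof -
    have "m * inner (wg m) (wg n) = inner (H (wg m)) (wg n)" by (simp add: Hwg)
    also have "\<dots> = inner (wg m) (H (wg n))" using sa by blast
    also have "\<dots> = n * inner (wg m) (wg n)" by (simp add: Hwg)
    finally show ?thesis using that by simp
  qed
  have "inner w (H w) = (\<Sum>m\<in>E. \<Sum>n\<in>E. n * inner (wg m) (wg n))"
    unfolding wsum by (simp add: linear_sum[OF lin] o_def Hwg inner_sum_left inner_sum_right sum_distrib_left, rule sum.swap)
  also have "\<dots> = (\<Sum>m\<in>E. m * inner (wg m) (wg m))"
  proof (rule sum.cong[OF refl])
    fix m assume m: "m \<in> E"
    have "(\<Sum>n\<in>E. n * inner (wg m) (wg n)) = (\<Sum>n\<in>E. if n = m then m * inner (wg m) (wg m) else 0)"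
      by (rule sum.cong) (auto simp: orth)
    also have "\<dots> = m * inner (wg m) (wg m)" using m finE by simp
    finally show "(\<Sum>n\<in>E. n * inner (wg m) (wg n)) = m * inner (wg m) (wg m)" .
  qed
  also have "\<dots> \<le> 0"
  proof (rule sum_nonpos)
    fix m assume "m \<in> E"
    then obtain v where "v \<in> S" "m = e v" unfolding E_def by blast
    hence "m \<le> 0" using evp by blast
    thus "m * inner (wg m) (wg m) \<le> 0" by (simp add: mult_nonpos_nonneg)
  qed
  finally show ?thesis .
qed

lemma W_zero:
  fixes H :: "'v::euclidean_space \<Rightarrow> 'v"
  assumes lin: "linear H" and sa: "\<forall>x y. inner (H x) y = inner x (H y)"
    and fin: "finite S"
    and ev: "\<forall>v\<in>S. is_eigenvector H v \<and> inner v (H v) / inner v v \<le> 0"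
    and w: "w \<in> span S" and z: "inner w (H w) = 0"
  shows "H w = 0"
proof -
  define Q where "Q x = - H x" for x
  have lq: "linear Q" unfolding Q_def[abs_def] using lin by (rule linear_compose_neg)
  have saQ: "\<forall>x y. inner (Q x) y = inner x (Q y)" unfolding Q_def using sa by simp
  have zQ: "inner w (Q w) = 0" unfolding Q_def using z by simp
  have Hw: "H w \<in> span S" using W_inv[OF lin] ev w by blast
  have "\<forall>t::real. 0 \<le> inner (w - t *\<^sub>R H w) (Q (w - t *\<^sub>R H w))"
  proof
    fix t :: real
    have "w - t *\<^sub>R H w \<in> span S" using w Hw by (simp add: span_diff span_mul)
    thus "0 \<le> inner (w - t *\<^sub>R H w) (Q (w - t *\<^sub>R H w))"
      unfolding Q_def using W_nonpos[OF lin sa fin ev] by fastforce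
  qed
  from var_zero[OF lq saQ zQ this] have "inner (H w) (H w) = 0" unfolding Q_def by simp
  thus ?thesis by simp
qed

lemma quad_id:
  fixes q :: "nat \<Rightarrow> 'v::real_inner"
  shows "(\<Sum>i<N. \<Sum>j<N. c i * inner (q i) (q j) * c j) =
    inner (\<Sum>i<N. c i *\<^sub>R q i) (\<Sum>j<N. c j *\<^sub>R q j)"
  using quadQ[OF linear_id[unfolded id_def], where N=N and c=c and q=q] by simp

lemma opA_skew:
  assumes sa: "\<forall>x y. inner (H x) y = inner x (H y)"
  shows "inner (opA N H W w) z + inner w (opA N H W z) = 0"
proof -
  have "inner (opA N H W w) z + inner w (opA N H W z) =
    (\<Sum>k<N. (inner (W k) w * inner (H (W k)) z - inner (H (W k)) w * inner (W k) z)
      + (inner (W k) z * inner w (H (W k)) - inner (H (W k)) z * inner w (W k)))"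
    unfolding opA_def by (simp add: inner_sum_left inner_sum_right inner_diff_left inner_diff_right sum.distrib)
  also have "\<dots> = 0"
    by (rule sum.neutral) (simp add: sa inner_commute)
  finally show ?thesis .
qed

lemma inner_ident:
  fixes x y u v :: "'v::real_inner"
  shows "inner y v - inner x u = inner (y - x) ((1/2::real) *\<^sub>R (u + v)) + inner ((1/2::real) *\<^sub>R (x + y)) (v - u)"
proof -
  have "inner (y - x) ((1/2::real) *\<^sub>R (u + v)) + inner ((1/2::real) *\<^sub>R (x + y)) (v - u)
    = (1/2) * (inner y u + inner y v - inner x u - inner x v + inner x v - inner x u + inner y v - inner y u)"
    by (simp add: inner_add_left inner_add_right inner_diff_left inner_diff_right algebra_simps)
  thus ?thesis by simp
qed

lemma gram_pres:
  fixes H :: "'v::real_inner \<Rightarrow> 'v"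
  assumes sa: "\<forall>x y. inner (H x) y = inner x (H y)"
    and half: "qo_half_step N H s U Uh" and i: "i < N" and j: "j < N"
  shows "inner (Uh i) (Uh j) = inner (U i) (U j)"
proof -
  define ut where "ut = (\<lambda>i. (1/2::real) *\<^sub>R (U i + Uh i))"
  have D: "Uh k - U k = - s *\<^sub>R opA N H ut (ut k)" if "k < N" for k
  proof -
    have "Uh k = U k - s *\<^sub>R opA N H ut (ut k)" using half that unfolding qo_half_step_def ut_def by blast
    thus ?thesis by simp
  qed
  have "inner (Uh i) (Uh j) - inner (U i) (U j) = inner (Uh i - U i) (ut j) + inner (ut i) (Uh j - U j)"
    unfolding ut_def by (rule inner_ident)
  also have "\<dots> = - s * (inner (opA N H ut (ut i)) (ut j) + inner (ut i) (opA N H ut (ut j)))"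
    unfolding D[OF i] D[OF j] by (simp add: algebra_simps)
  also have "\<dots> = 0" using opA_skew[OF sa] by simp
  finally show ?thesis by simp
qed

lemma arith1: "(Q::real) = 1/4*(X + 2*Y + W) \<Longrightarrow> 2*Y \<le> X + W \<Longrightarrow> W = X \<Longrightarrow> X \<le> Z \<Longrightarrow> Q \<le> Z"
  by simp

lemma stepB:
  fixes H :: "'v::euclidean_space \<Rightarrow> 'v"
  assumes lin: "linear H" and sa: "\<forall>x y. inner (H x) y = inner x (H y)"
    and ev: "\<forall>v\<in>S. is_eigenvector H v"
    and up: "\<forall>x. inner x (H x) \<le> lammax * inner x x"
    and lo: "\<forall>x. lam1 * inner x x \<le> inner x (H x)"
    and le: "lam1 \<le> lammax" and s_pos: "0 < s" and s_small: "s * (lammax - lam1) < 2"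
    and UW: "\<forall>j<N. U j \<in> span S"
    and Gle: "\<forall>c. (\<Sum>i<N. \<Sum>j<N. c i * inner (U i) (U j) * c j) \<le> (\<Sum>i<N. (c i)^2)"
    and half: "qo_half_step N H s U Uh"
  shows "\<forall>j<N. Uh j \<in> span S"
proof -
  define ut where "ut = (\<lambda>i. (1/2::real) *\<^sub>R (U i + Uh i))"
  have "\<forall>j. \<exists>yy. yy \<in> span S \<and> (\<forall>w\<in>span S. inner (Uh j - yy) w = 0)"
  proof
    fix j
    obtain y z where "y \<in> span S" "\<And>w. w \<in> span S \<Longrightarrow> orthogonal z w" "Uh j = y + z"
      using orthogonal_subspace_decomp_exists[of S "Uh j"] by blast
    thus "\<exists>yy. yy \<in> span S \<and> (\<forall>w\<in>span S. inner (Uh j - yy) w = 0)"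
      by (auto simp: orthogonal_def)
  qed
  then obtain y where y: "\<And>j. y j \<in> span S" and yo: "\<And>j w. w \<in> span S \<Longrightarrow> inner (Uh j - y j) w = 0"
    by metis
  define z where "z j = Uh j - y j" for j
  have zo: "inner (z j) w = 0" "inner w (z j) = 0" if "w \<in> span S" for j w
    using yo[OF that] unfolding z_def by (auto simp: inner_commute)
  have Hz: "inner w (H (z j)) = 0" if "w \<in> span S" for j w
  proof -
    have "H w \<in> span S" using W_inv[OF lin ev that] .
    thus ?thesis using zo sa by metis
  qed
  have Uhyz: "Uh j = y j + z j" for j unfolding z_def by simp
  have utz: "inner (ut i) (z j) = (1/2) * inner (z i) (z j)" if "i < N" for i j
  proof -
    have "inner (ut i) (z j) = (1/2) * (inner (U i) (z j) + inner (y i) (z j) + inner (z i) (z j))"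
      unfolding ut_def Uhyz by (simp add: inner_add_left)
    thus ?thesis using zo UW y that by simp
  qed
  have Hutz: "inner (H (ut i)) (z j) = (1/2) * inner (z i) (H (z j))" if "i < N" for i j
  proof -
    have "inner (H (ut i)) (z j) = inner (ut i) (H (z j))" using sa by blast
    also have "\<dots> = (1/2) * (inner (U i) (H (z j)) + inner (y i) (H (z j)) + inner (z i) (H (z j)))"
      unfolding ut_def Uhyz by (simp add: inner_add_left)
    finally show ?thesis using Hz UW y that by simp
  qed
  define Gt where "Gt i j = inner (ut i) (ut j)" for i j
  define M where "M i j = inner (H (ut i)) (ut j)" for i j
  define Sz where "Sz = (\<Sum>j<N. inner (z j) (z j))"
  define A1 where "A1 = (\<Sum>i<N. \<Sum>j<N. Gt i j * inner (z i) (H (z j)))"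
  define A2 where "A2 = (\<Sum>i<N. \<Sum>j<N. M i j * inner (z i) (z j))"
  define T where "T = (\<Sum>i<N. \<Sum>j<N. Gt i j * inner (z i) (z j))"
  have perj: "inner (z j) (z j) = - s * (\<Sum>i<N. Gt i j * ((1/2) * inner (z i) (H (z j))) - M i j * ((1/2) * inner (z i) (z j)))"
    if j: "j < N" for j
  proof -
    have "Uh j = U j - s *\<^sub>R opA N H ut (ut j)" using half j unfolding qo_half_step_def ut_def by blast
    hence D: "Uh j - U j = - s *\<^sub>R opA N H ut (ut j)" by simp
    have "inner (Uh j - U j) (z j) = inner (y j - U j) (z j) + inner (z j) (z j)"
      unfolding Uhyz by (simp add: inner_add_left inner_diff_left)
    also have "inner (y j - U j) (z j) = 0" using zo y UW j span_diff by blast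
    finally have "inner (z j) (z j) = inner (Uh j - U j) (z j)" by simp
    also have "\<dots> = - s * inner (opA N H ut (ut j)) (z j)" unfolding D by simp
    also have "inner (opA N H ut (ut j)) (z j) = (\<Sum>i<N. Gt i j * inner (H (ut i)) (z j) - M i j * inner (ut i) (z j))"
      unfolding opA_def Gt_def M_def by (simp add: inner_sum_left inner_diff_left)
    also have "\<dots> = (\<Sum>i<N. Gt i j * ((1/2) * inner (z i) (H (z j))) - M i j * ((1/2) * inner (z i) (z j)))"
      by (rule sum.cong) (simp_all add: utz Hutz)
    finally show ?thesis .
  qed
  have SzA: "Sz = - (s/2) * (A1 - A2)"
  proof -
    have "Sz = (\<Sum>j<N. - s * (\<Sum>i<N. Gt i j * ((1/2) * inner (z i) (H (z j))) - M i j * ((1/2) * inner (z i) (z j))))"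
      unfolding Sz_def by (rule sum.cong) (simp_all add: perj)
    also have "\<dots> = - (s/2) * (\<Sum>j<N. \<Sum>i<N. Gt i j * inner (z i) (H (z j)) - M i j * inner (z i) (z j))"
      by (simp add: sum_distrib_left algebra_simps)
    also have "(\<Sum>j<N. \<Sum>i<N. Gt i j * inner (z i) (H (z j)) - M i j * inner (z i) (z j)) = A1 - A2"
      unfolding A1_def A2_def by (simp add: sum_subtractf, subst (1 2) sum.swap, rule refl)
    finally show ?thesis .
  qed
  have a: "lam1 * T \<le> A1"
  proof -
    have lq: "linear (\<lambda>x. H x - lam1 *\<^sub>R x)"
      using lin by (intro linear_compose_sub linear_compose_scale_right linear_id[unfolded id_def]) auto
    have "0 \<le> (\<Sum>i<N. \<Sum>j<N. inner (ut i) (ut j) * inner (z i) (H (z j) - lam1 *\<^sub>R z j))"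
      by (rule psd_trick[OF lq]) (use lo in \<open>simp add: inner_diff_right\<close>)
    also have "\<dots> = A1 - lam1 * T"
      unfolding A1_def T_def Gt_def by (simp add: inner_diff_right sum_subtractf sum_distrib_left algebra_simps)
    finally show ?thesis by simp
  qed
  have b: "A2 \<le> lammax * T"
  proof -
    have lq: "linear (\<lambda>x. lammax *\<^sub>R x - H x)"
      using lin by (intro linear_compose_sub linear_compose_scale_right linear_id[unfolded id_def]) auto
    have "0 \<le> (\<Sum>i<N. \<Sum>j<N. inner (z i) (z j) * inner (ut i) (lammax *\<^sub>R ut j - H (ut j)))"
      by (rule psd_trick[OF lq]) (use up in \<open>simp add: inner_diff_right\<close>)
    also have "\<dots> = lammax * T - A2"
      unfolding A2_def T_def Gt_def M_def using sa
      by (simp add: inner_diff_right sum_subtractf sum_distrib_left algebra_simps)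
    finally show ?thesis by simp
  qed
  have c: "0 \<le> T"
  proof -
    have "0 \<le> (\<Sum>i<N. \<Sum>j<N. inner (ut i) (ut j) * inner (z i) ((\<lambda>x. x) (z j)))"
      by (rule psd_trick[OF linear_id[unfolded id_def]]) simp
    thus ?thesis unfolding T_def Gt_def by simp
  qed
  have Gtle: "(\<Sum>i<N. \<Sum>j<N. cc i * Gt i j * cc j) \<le> (\<Sum>i<N. (cc i)^2)" for cc
  proof -
    define av where "av = (\<Sum>i<N. cc i *\<^sub>R U i)"
    define bv where "bv = (\<Sum>i<N. cc i *\<^sub>R Uh i)"
    have "(\<Sum>i<N. \<Sum>j<N. cc i * Gt i j * cc j) = inner (\<Sum>i<N. cc i *\<^sub>R ut i) (\<Sum>j<N. cc j *\<^sub>R ut j)"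
      unfolding Gt_def by (rule quad_id)
    also have "(\<Sum>i<N. cc i *\<^sub>R ut i) = (1/2::real) *\<^sub>R (av + bv)"
      unfolding ut_def av_def bv_def by (simp add: scaleR_sum_right sum.distrib scaleR_add_right)
    finally have e1: "(\<Sum>i<N. \<Sum>j<N. cc i * Gt i j * cc j) = (1/4) * (inner av av + 2 * inner av bv + inner bv bv)"
      by (simp add: inner_add_left inner_add_right inner_commute algebra_simps)
    have "0 \<le> inner (av - bv) (av - bv)" by simp
    hence e2: "2 * inner av bv \<le> inner av av + inner bv bv"
      by (simp add: inner_diff_left inner_diff_right inner_commute)
    have "inner bv bv = (\<Sum>i<N. \<Sum>j<N. cc i * inner (Uh i) (Uh j) * cc j)"
      unfolding bv_def by (rule quad_id[symmetric])
    also have "\<dots> = (\<Sum>i<N. \<Sum>j<N. cc i * inner (U i) (U j) * cc j)"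
      by (intro sum.cong refl) (simp add: gram_pres[OF sa half])
    also have "\<dots> = inner av av" unfolding av_def by (rule quad_id)
    finally have e3: "inner bv bv = inner av av" .
    have e4: "inner av av \<le> (\<Sum>i<N. (cc i)^2)"
    proof -
      have "inner av av = (\<Sum>i<N. \<Sum>j<N. cc i * inner (U i) (U j) * cc j)"
        unfolding av_def by (rule quad_id[symmetric])
      also have "\<dots> \<le> (\<Sum>i<N. (cc i)^2)" using Gle by blast
      finally show ?thesis .
    qed
    show ?thesis by (rule arith1[OF e1 e2 e3 e4])
  qed
  have d: "T \<le> Sz"
  proof -
    have "T = (\<Sum>i<N. \<Sum>j<N. inner (z i) (z j) * Gt i j)" unfolding T_def by (simp add: mult_ac)
    also have "\<dots> = (\<Sum>b\<in>Basis. \<Sum>i<N. \<Sum>j<N. inner (z i) b * Gt i j * inner (z j) b)"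
      by (rule gram_expand)
    also have "\<dots> \<le> (\<Sum>b\<in>Basis. \<Sum>i<N. (inner (z i) b)^2)"
      by (rule sum_mono) (rule Gtle)
    also have "\<dots> = (\<Sum>i<N. \<Sum>b\<in>Basis. (inner (z i) b)^2)" by (rule sum.swap)
    also have "\<dots> = Sz" unfolding Sz_def
      by (rule sum.cong[OF refl]) (simp add: euclidean_inner[of "z _" "z _"] power2_eq_square)
    finally show ?thesis .
  qed
  have Sz0: "0 \<le> Sz" unfolding Sz_def by (simp add: sum_nonneg)
  have "Sz \<le> 0"
  proof (rule ccontr)
    assume "\<not> Sz \<le> 0"
    hence Sp: "Sz > 0" by simp
    have "A2 - A1 \<le> (lammax - lam1) * T" using a b by (simp add: algebra_simps)
    also have "\<dots> \<le> (lammax - lam1) * Sz" using d le by (simp add: mult_left_mono)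
    finally have "s * (A2 - A1) \<le> s * ((lammax - lam1) * Sz)" using s_pos by (simp add: mult_left_mono)
    moreover have "2 * Sz = s * (A2 - A1)" using SzA by (simp add: field_simps)
    ultimately have "2 * Sz \<le> (s * (lammax - lam1)) * Sz" by (simp add: mult.assoc)
    moreover have "(s * (lammax - lam1)) * Sz < 2 * Sz" using s_small Sp by (simp add: mult_strict_right_mono)
    ultimately show False by simp
  qed
  hence "Sz = 0" using Sz0 by simp
  hence "\<forall>j\<in>{..<N}. inner (z j) (z j) = 0" unfolding Sz_def
    by (subst sum_nonneg_eq_0_iff[symmetric]) auto
  hence "\<forall>j<N. z j = 0" by simp
  thus ?thesis using y Uhyz by simp
qed

lemma stepC:
  fixes H :: "'v::euclidean_space \<Rightarrow> 'v"
  assumes lin: "linear H" and sa: "\<forall>x y. inner (H x) y = inner x (H y)"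
    and fin: "finite S"
    and ev: "\<forall>v\<in>S. is_eigenvector H v \<and> inner v (H v) / inner v v \<le> 0"
    and UhW: "\<forall>j<N. Uh j \<in> span S"
    and Gle: "\<forall>c. (\<Sum>i<N. \<Sum>j<N. c i * inner (Uh i) (Uh j) * c j) \<le> (\<Sum>i<N. (c i)^2)"
    and Gpd: "\<forall>c. (\<exists>i<N. c i \<noteq> 0) \<longrightarrow> 0 < (\<Sum>i<N. \<Sum>j<N. c i * inner (Uh i) (Uh j) * c j)"
    and s_pos: "0 < s"
  shows "pd N (gram N (qo_correction N H s Uh) (qo_correction N H s Uh))"
  unfolding pd_def
proof (intro conjI allI impI)
  fix i j assume "i < N" "j < N"
  show "gram N (qo_correction N H s Uh) (qo_correction N H s Uh) i j =
        gram N (qo_correction N H s Uh) (qo_correction N H s Uh) j i"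
    unfolding gram_def by (simp add: inner_commute)
next
  fix c :: "nat \<Rightarrow> real"
  assume cne: "\<exists>i<N. c i \<noteq> 0"
  define U' where "U' = qo_correction N H s Uh"
  define G where "G i j = inner (Uh i) (Uh j)" for i j
  define e where "e k = (\<Sum>i<N. c i * G i k)" for k
  define d where "d k = (\<Sum>j<N. (idm k j - G k j) * c j)" for k
  define a where "a = (\<Sum>i<N. c i *\<^sub>R Uh i)"
  define b where "b = (\<Sum>k<N. d k *\<^sub>R Uh k)"
  define v where "v = (\<Sum>i<N. c i *\<^sub>R U' i)"
  have Gs: "G i j = G j i" for i j unfolding G_def by (simp add: inner_commute)
  have dk: "d k = c k - e k" if "k < N" for k
  proof -
    have "d k = (\<Sum>j<N. idm k j * c j) - (\<Sum>j<N. G k j * c j)"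
      unfolding d_def by (simp add: sum_subtractf algebra_simps)
    also have "(\<Sum>j<N. idm k j * c j) = (\<Sum>j<N. if k = j then c j else 0)"
      by (rule sum.cong) (simp_all add: idm_def)
    also have "\<dots> = c k" using that by simp
    also have "(\<Sum>j<N. G k j * c j) = e k" unfolding e_def by (simp add: Gs mult_ac)
    finally show ?thesis .
  qed
  have vab: "v = a - s *\<^sub>R H b"
  proof -
    have "v = a - s *\<^sub>R (\<Sum>j<N. c j *\<^sub>R (\<Sum>k<N. (idm k j - G k j) *\<^sub>R H (Uh k)))"
      unfolding v_def U'_def a_def qo_correction_def mat_act_def gram_def G_def
      by (simp add: scaleR_diff_right sum_subtractf scaleR_sum_right)
         (intro sum.cong refl, simp add: mult_ac)
    also have "(\<Sum>j<N. c j *\<^sub>R (\<Sum>k<N. (idm k j - G k j) *\<^sub>R H (Uh k))) =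
       (\<Sum>j<N. \<Sum>k<N. ((idm k j - G k j) * c j) *\<^sub>R H (Uh k))"
      by (simp add: scaleR_sum_right mult.commute)
    also have "\<dots> = (\<Sum>k<N. \<Sum>j<N. ((idm k j - G k j) * c j) *\<^sub>R H (Uh k))"
      by (rule sum.swap)
    also have "\<dots> = H b"
      unfolding b_def d_def
      by (simp add: linear_sum[OF lin] linear_scale[OF lin] o_def scaleR_sum_left)
    finally show ?thesis .
  qed
  have quad: "(\<Sum>i<N. \<Sum>j<N. c i * gram N U' U' i j * c j) = inner v v"
    unfolding gram_def v_def by (rule quad_id)
  have vne: "v \<noteq> 0"
  proof
    assume "v = 0"
    hence aH: "a = s *\<^sub>R H b" using vab by simp
    have bW: "b \<in> span S" unfolding b_def using UhW by (intro span_sum span_mul) auto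
    have aUh: "inner a (Uh k) = e k" for k
      unfolding a_def e_def G_def by (simp add: inner_sum_left)
    have ab: "inner a b = (\<Sum>k<N. c k * e k) - (\<Sum>k<N. e k * e k)"
    proof -
      have "inner a b = (\<Sum>k<N. d k * e k)" unfolding b_def by (simp add: inner_sum_right aUh)
      also have "\<dots> = (\<Sum>k<N. c k * e k - e k * e k)"
        by (rule sum.cong) (simp_all add: dk algebra_simps)
      finally show ?thesis by (simp add: sum_subtractf)
    qed
    have aa: "(\<Sum>k<N. c k * e k) = inner a a"
    proof -
      have "(\<Sum>k<N. c k * e k) = (\<Sum>k<N. c k * inner a (Uh k))" by (simp add: aUh)
      also have "\<dots> = inner a (\<Sum>k<N. c k *\<^sub>R Uh k)" by (simp add: inner_sum_right)
      also have "\<dots> = inner a a" by (simp add: a_def)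
      finally show ?thesis .
    qed
    define f where "f = (\<Sum>k<N. e k *\<^sub>R Uh k)"
    define Ee where "Ee = (\<Sum>k<N. e k * e k)"
    have Eaf: "Ee = inner a f" unfolding Ee_def f_def by (simp add: inner_sum_right aUh)
    have ff: "inner f f \<le> Ee"
    proof -
      have "inner f f = (\<Sum>i<N. \<Sum>j<N. e i * inner (Uh i) (Uh j) * e j)"
        unfolding f_def by (rule quad_id[symmetric])
      also have "\<dots> \<le> (\<Sum>i<N. (e i)^2)" using Gle by blast
      finally show ?thesis unfolding Ee_def by (simp add: power2_eq_square)
    qed
    have Ee0: "0 \<le> Ee" unfolding Ee_def by (simp add: sum_nonneg)
    have "Ee \<le> inner a a"
    proof (cases "Ee = 0")
      case True thus ?thesis by simp
    next
      case False
      hence Ep: "Ee > 0" using Ee0 by simp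
      have "Ee \<le> norm a * norm f" using Eaf norm_cauchy_schwarz by metis
      hence "Ee^2 \<le> (norm a * norm f)^2" using Ee0 by (simp add: power_mono)
      also have "\<dots> = inner a a * inner f f" by (simp add: power_mult_distrib dot_square_norm)
      also have "\<dots> \<le> inner a a * Ee" using ff by (simp add: mult_left_mono)
      finally have "Ee * Ee \<le> inner a a * Ee" by (simp add: power2_eq_square)
      thus ?thesis using Ep by simp
    qed
    hence ab0: "0 \<le> inner a b" using ab aa Ee_def by simp
    have "inner a b = s * inner b (H b)" unfolding aH using sa by (simp add: inner_commute)
    hence "0 \<le> inner b (H b)" using ab0 s_pos by (simp add: zero_le_mult_iff)
    moreover have "inner b (H b) \<le> 0" using W_nonpos[OF lin sa fin ev bW] .
    ultimately have "inner b (H b) = 0" by simp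
    hence "H b = 0" using W_zero[OF lin sa fin ev bW] by simp
    hence "a = 0" using aH by simp
    hence "(\<Sum>i<N. \<Sum>j<N. c i * inner (Uh i) (Uh j) * c j) = 0" unfolding a_def
      by (simp add: quad_id)
    thus False using Gpd cne by fastforce
  qed
  show "0 < (\<Sum>i<N. \<Sum>j<N. c i * gram N (qo_correction N H s Uh) (qo_correction N H s Uh) i j * c j)"
    using quad vne unfolding U'_def by simp
qed

theorem lemma3p3:
  fixes H :: "'v::euclidean_space \<Rightarrow> 'v"
    and N :: nat and lam1 lammax s :: real
    and Vs :: "nat \<Rightarrow> 'v set"
    and U Uh :: "nat \<Rightarrow> 'v"
  assumes lin: "linear H"
    and selfadj: "\<forall>x y. inner (H x) y = inner x (H y)"
    and lam1_eig: "is_eigenvalue H lam1" and lam1_min: "\<forall>\<mu>. is_eigenvalue H \<mu> \<longrightarrow> lam1 \<le> \<mu>"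
    and lammax_eig: "is_eigenvalue H lammax" and lammax_max: "\<forall>\<mu>. is_eigenvalue H \<mu> \<longrightarrow> \<mu> \<le> lammax"
    and lam1_neg: "lam1 < 0"
    and N_pos: "1 \<le> N"
    and Vs_fin: "\<forall>j<N. finite (Vs j) \<and> Vs j \<noteq> {}"
    and Vs_eig: "\<forall>j<N. \<forall>v\<in>Vs j. is_eigenvector H v"
    and lam0: "Max (\<Union>j<N. (\<lambda>v. inner v (H v) / inner v v) ` Vs j) \<le> 0"
    and U_V0: "\<forall>j<N. U j \<in> span (Vs j)"
    and U_qs: "quasi_stiefel N U"
    and s_pos: "0 < s"
    and s_small: "s * \<bar>lam1 - lammax\<bar> < 2"
    and half: "qo_half_step N H s U Uh"
  shows "pd N (gram N (qo_correction N H s Uh) (qo_correction N H s Uh))"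
proof -
  define S where "S = (\<Union>j<N. Vs j)"
  have fin: "finite S" unfolding S_def using Vs_fin by auto
  define R where "R = (\<Union>j<N. (\<lambda>v. inner v (H v) / inner v v) ` Vs j)"
  have finR: "finite R" unfolding R_def using Vs_fin by auto
  have evS: "\<forall>v\<in>S. is_eigenvector H v \<and> inner v (H v) / inner v v \<le> 0"
  proof
    fix v assume "v \<in> S"
    then obtain j where j: "j < N" "v \<in> Vs j" unfolding S_def by blast
    hence "inner v (H v) / inner v v \<in> R" unfolding R_def by blast
    hence "inner v (H v) / inner v v \<le> Max R" using Max_ge[OF finR] by blast
    moreover have "Max R \<le> 0" using lam0 unfolding R_def .
    moreover have "is_eigenvector H v" using Vs_eig j by blast
    ultimately show "is_eigenvector H v \<and> inner v (H v) / inner v v \<le> 0" by linarith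
  qed
  have ev: "\<forall>v\<in>S. is_eigenvector H v" using evS by blast
  have UW: "\<forall>j<N. U j \<in> span S"
  proof (intro allI impI)
    fix j assume "j < N"
    hence "Vs j \<subseteq> S" unfolding S_def by blast
    thus "U j \<in> span S" using U_V0 \<open>j < N\<close> span_mono by blast
  qed
  obtain m1 where m1: "is_eigenvalue H m1" "\<forall>x. inner x (H x) \<le> m1 * inner x x"
    using rayleigh_max[OF lin selfadj] by blast
  have up: "\<forall>x. inner x (H x) \<le> lammax * inner x x"
  proof
    fix x :: 'v
    have "m1 \<le> lammax" using lammax_max m1(1) by blast
    hence "m1 * inner x x \<le> lammax * inner x x" by (simp add: mult_right_mono)
    thus "inner x (H x) \<le> lammax * inner x x" by (rule order_trans[OF m1(2)[rule_format]])
  qed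
  have linN: "linear (\<lambda>x. - H x)" using lin by (rule linear_compose_neg)
  have saN: "\<forall>x y. inner (- H x) y = inner x (- H y)" using selfadj by simp
  obtain m2 where m2: "is_eigenvalue (\<lambda>x. - H x) m2" "\<forall>x. inner x (- H x) \<le> m2 * inner x x"
    using rayleigh_max[OF linN saN] by blast
  have "is_eigenvalue H (- m2)"
  proof -
    obtain v where v: "v \<noteq> 0" "- H v = m2 *\<^sub>R v" using m2(1) unfolding is_eigenvalue_def by blast
    have "H v = - (- H v)" by simp
    also have "\<dots> = (- m2) *\<^sub>R v" using v(2) by simp
    finally show ?thesis using v(1) unfolding is_eigenvalue_def by blast
  qed
  hence lm2: "lam1 \<le> - m2" using lam1_min by blast
  have lo: "\<forall>x. lam1 * inner x x \<le> inner x (H x)"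
  proof
    fix x :: 'v
    have "lam1 * inner x x \<le> (- m2) * inner x x" using lm2 by (intro mult_right_mono) simp_all
    also have "\<dots> \<le> inner x (H x)" using m2(2)[rule_format, of x] by simp
    finally show "lam1 * inner x x \<le> inner x (H x)" .
  qed
  have le: "lam1 \<le> lammax" using lam1_min lammax_eig by blast
  have s_small': "s * (lammax - lam1) < 2" using s_small le by simp
  have GleU: "\<forall>c. (\<Sum>i<N. \<Sum>j<N. c i * inner (U i) (U j) * c j) \<le> (\<Sum>i<N. (c i)^2)"
  proof
    fix c :: "nat \<Rightarrow> real"
    have "0 \<le> (\<Sum>i<N. \<Sum>j<N. c i * (idm i j - gram N U U i j) * c j)"
      using U_qs unfolding quasi_stiefel_def psd_def by blast
    also have "\<dots> = (\<Sum>i<N. \<Sum>j<N. c i * idm i j * c j) - (\<Sum>i<N. \<Sum>j<N. c i * inner (U i) (U j) * c j)"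
      unfolding gram_def by (simp add: sum_subtractf algebra_simps)
    also have "(\<Sum>i<N. \<Sum>j<N. c i * idm i j * c j) = (\<Sum>i<N. (c i)^2)"
    proof (rule sum.cong[OF refl])
      fix i assume i: "i \<in> {..<N}"
      have "(\<Sum>j<N. c i * idm i j * c j) = (\<Sum>j<N. if i = j then c i * c j else 0)"
        by (rule sum.cong) (simp_all add: idm_def)
      also have "\<dots> = (c i)^2" using i by (simp add: power2_eq_square)
      finally show "(\<Sum>j<N. c i * idm i j * c j) = (c i)^2" .
    qed
    finally show "(\<Sum>i<N. \<Sum>j<N. c i * inner (U i) (U j) * c j) \<le> (\<Sum>i<N. (c i)^2)" by simp
  qed
  have gp: "\<And>c. (\<Sum>i<N. \<Sum>j<N. c i * inner (Uh i) (Uh j) * c j) = (\<Sum>i<N. \<Sum>j<N. c i * inner (U i) (U j) * c j)"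
    by (intro sum.cong refl) (simp add: gram_pres[OF selfadj half])
  have GleUh: "\<forall>c. (\<Sum>i<N. \<Sum>j<N. c i * inner (Uh i) (Uh j) * c j) \<le> (\<Sum>i<N. (c i)^2)"
    using GleU gp by simp
  have Gpd: "\<forall>c. (\<exists>i<N. c i \<noteq> 0) \<longrightarrow> 0 < (\<Sum>i<N. \<Sum>j<N. c i * inner (Uh i) (Uh j) * c j)"
  proof (intro allI impI)
    fix c :: "nat \<Rightarrow> real" assume "\<exists>i<N. c i \<noteq> 0"
    hence "0 < (\<Sum>i<N. \<Sum>j<N. c i * gram N U U i j * c j)"
      using U_qs unfolding quasi_stiefel_def pd_def by blast
    thus "0 < (\<Sum>i<N. \<Sum>j<N. c i * inner (Uh i) (Uh j) * c j)" unfolding gp gram_def .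
  qed
  have UhW: "\<forall>j<N. Uh j \<in> span S"
    by (rule stepB[OF lin selfadj ev up lo le s_pos s_small' UW GleU half])
  show ?thesis by (rule stepC[OF lin selfadj fin evS UhW GleUh Gpd s_pos])
qed

end
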